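(* For every integer $n\ge 2$ and every real number $p\in(0,1)$, \[ (n-2)\bigl(n^p-(n-1)^p\bigr)^{1/(1-p)}+1\le (n-1)^{p/(1-p)}. \] *)

theory Defs
  imports Complex_Main
begin

end

theory Submission
  imports Defs "HOL-Analysis.Analysis"
begin

theorem lemma5:
  fixes n :: nat and p :: real
  assumes "n \<ge> 2" and "0 < p" and "p < 1"
  shows "(real n - 2) * (real n powr p - (real n - 1) powr p) powr (1 / (1 - p)) + 1
           \<le> (real n - 1) powr (p / (1 - p))"
proof -
  define m where "m = real n - 1"
  have m1: "m \<ge> 1" using assms(1) unfolding m_def by simp
  have n_eq: "real n = m + 1" unfolding m_def by simp
  define t where "t = 1 / (1 - p)"
  define q where "q = p / (1 - p)"
  have t1: "t \<ge> 1" unfolding t_def using assms by simp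
  have qp: "q \<ge> p" unfolding q_def using assms by (simp add: field_simps)
  have tq: "(p - 1) * t = -1" unfolding t_def using assms by (simp add: field_simps)
  define d where "d = (m + 1) powr p - m powr p"
  have d0: "0 \<le> d" unfolding d_def using assms m1 by (simp add: powr_mono2)
  have y: "(m+1) powr p * m powr (1 - p) \<le> p*(m+1) + (1-p)*m"
    using Youngs_inequality_0[of p "1-p" "m+1" m] assms m1 by simp
  have mp: "m powr (1-p) > 0" using m1 by simp
  have e1: "m powr (1-p) * m powr (p - 1) = 1"
    using m1 by (simp add: powr_add[symmetric])
  have e2: "m powr (1-p) * m powr p = m"
    using m1 by (simp add: powr_add[symmetric])
  have "(m+1) powr p \<le> (m + p) * m powr (p - 1)"
  proof -
    have "(m+1) powr p = ((m+1) powr p * m powr (1 - p)) * m powr (p - 1)"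
      using e1 by (simp add: algebra_simps)
    also have "\<dots> \<le> (m + p) * m powr (p - 1)"
      using y by (intro mult_right_mono) (auto simp: algebra_simps)
    finally show ?thesis .
  qed
  moreover have "m * m powr (p - 1) = m powr p"
    using m1 by (simp add: powr_add[symmetric] powr_mult_base)
  ultimately have dle: "d \<le> p * m powr (p - 1)"
    unfolding d_def by (simp add: algebra_simps)
  have "d powr t \<le> (p * m powr (p - 1)) powr t"
    using d0 dle t1 by (intro powr_mono2) auto
  also have "\<dots> = p powr t * m powr ((p - 1) * t)"
    using assms m1 by (simp add: powr_mult powr_powr)
  also have "\<dots> = p powr t / m"
    using tq m1 by (simp add: powr_minus divide_inverse)
  also have "\<dots> \<le> p / m"
    using powr_mono'[of 1 t p] t1 assms m1 by (simp add: divide_right_mono)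
  finally have dt: "d powr t \<le> p / m" .
  have lnm: "ln m \<ge> 1 - 1/m"
    using ln_le_minus_one[of "1/m"] m1 by (simp add: ln_div)
  have "(m - 1) * d powr t + 1 \<le> (m - 1) * (p / m) + 1"
    using mult_left_mono[OF dt, of "m - 1"] m1 by simp
  also have "\<dots> = 1 + p * (1 - 1/m)"
    using m1 by (simp add: field_simps)
  also have "\<dots> \<le> 1 + q * ln m"
  proof -
    have "p * (1 - 1/m) \<le> q * (1 - 1/m)"
      using qp m1 by (intro mult_right_mono) (auto simp: field_simps)
    also have "\<dots> \<le> q * ln m"
      using lnm qp assms by (intro mult_left_mono) auto
    finally show ?thesis by simp
  qed
  also have "\<dots> \<le> exp (q * ln m)"
    by (rule exp_ge_add_one_self)
  also have "\<dots> = m powr q"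
    using m1 by (simp add: powr_def)
  finally have "(m - 1) * d powr t + 1 \<le> m powr q" .
  moreover have "real n - 2 = m - 1" unfolding m_def by simp
  ultimately show ?thesis
    unfolding d_def t_def q_def n_eq m_def[symmetric] by simp
qed

end
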